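(* Let $L\ge 4$ be even, and let $G=(V,E)$ be the $L\times L$ toroidal grid graph, which is bipartite. Let $A$ be one of its two color classes. Let $D\subseteq V$ be a set of even cardinality with $A\subseteq D$. Then $G$ has a $D$-join of size exactly $L^2/2$.
   Context: The $L\times L$ toroidal grid graph $G=(V,E)$ has vertex set $V=\mathbb{Z}_L\times\mathbb{Z}_L$. Its edges are $\{(i,j),(i+1,j)\}$ and $\{(i,j),(i,j+1)\}$ for all $(i,j)$, with indices mod $L$. For even $L$ its two color classes are $\{(i,j): i+j \text{ even}\}$ and $\{(i,j): i+j\text{ odd}\}$. For a set $J\subseteq E$, the $J$-degree of a vertex $v$ is the number of edges of $J$ incident to $v$. For $D\subseteq V$ of even size, a $D$-join is a set $J\subseteq E$ such that every vertex of $D$ has odd $J$-degree and every vertex of $V\setminus D$ has even $J$-degree. *)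

theory Defs
  imports Main
begin

text \<open>Vertices of the L x L toroidal grid: pairs (i,j) with i,j in {0..<L} (representing Z_L x Z_L).
Edges are unordered pairs, represented as two-element vertex sets.\<close>

definition torus_V :: "nat \<Rightarrow> (nat \<times> nat) set" where
  "torus_V L = {0..<L} \<times> {0..<L}"

definition torus_E :: "nat \<Rightarrow> (nat \<times> nat) set set" where
  "torus_E L =
     (\<Union>(i,j)\<in>torus_V L. {{(i,j), ((i+1) mod L, j)}, {(i,j), (i, (j+1) mod L)}})"

definition color_class :: "nat \<Rightarrow> nat \<Rightarrow> (nat \<times> nat) set" where
  "color_class L r = {(i,j) \<in> torus_V L. (i + j) mod 2 = r}"

definition jdeg :: "(nat \<times> nat) set set \<Rightarrow> nat \<times> nat \<Rightarrow> nat" where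
  "jdeg J v = card {e \<in> J. v \<in> e}"

definition is_join :: "nat \<Rightarrow> (nat \<times> nat) set \<Rightarrow> (nat \<times> nat) set set \<Rightarrow> bool" where
  "is_join L D J \<longleftrightarrow> J \<subseteq> torus_E L \<and>
     (\<forall>v\<in>D. odd (jdeg J v)) \<and> (\<forall>v\<in>torus_V L - D. even (jdeg J v))"

end

theory Submission
  imports Defs
begin

lemma mod2_add_modL: "even (L::nat) \<Longrightarrow> (a + b mod L) mod 2 = (a + b) mod 2"
  by (metis mod_add_right_eq mod_mod_cancel)
lemma mod2_add_modL': "even (L::nat) \<Longrightarrow> (a mod L + b) mod 2 = (a + b) mod 2"
  by (metis mod_add_left_eq mod_mod_cancel)

lemma suc_mod: "j < (L::nat) \<Longrightarrow> (j+1) mod L = (if j+1 = L then 0 else j+1)"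
  by auto

lemma pred_mod: "j < (L::nat) \<Longrightarrow> (j+L-1) mod L = (if j = 0 then L-1 else j-1)"
proof (cases "j = 0")
  case True
  assume "j < L" then show ?thesis using True by simp
next
  case False
  assume "j < L"
  then have e: "j + L - 1 = (j - 1) + L" using False by simp
  have "(j + L - 1) mod L = ((j - 1) + L) mod L" by (simp only: e)
  also have "\<dots> = j - 1" using \<open>j < L\<close> by simp
  finally show ?thesis using False by simp
qed

lemma sucmod2: "(x::nat) mod 2 = r \<Longrightarrow> r \<le> 1 \<Longrightarrow> (Suc x) mod 2 = 1 - r"
  by (auto simp: mod_Suc)
lemma predL: "even (L::nat) \<Longrightarrow> L \<ge> 2 \<Longrightarrow> (x + L - 1) mod 2 = Suc x mod 2"
proof -
  assume "even L" "L \<ge> 2"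
  then obtain k where k: "L = 2*k" "k \<ge> 1" by auto
  then have "x + L - 1 = Suc x + 2*(k-1)" by simp
  then show ?thesis by simp
qed

locale tor =
  fixes L :: nat and r :: nat
  assumes L4: "L \<ge> 4" and evL: "even L" and r01: "r \<le> 1"
begin

definition "A = color_class L r"
definition "W = color_class L (1 - r)"
fun rt :: "nat \<times> nat \<Rightarrow> nat \<times> nat" where "rt (i,j) = (i, (j+1) mod L)"
fun lf :: "nat \<times> nat \<Rightarrow> nat \<times> nat" where "lf (i,j) = (i, (j+L-1) mod L)"
fun dn :: "nat \<times> nat \<Rightarrow> nat \<times> nat" where "dn (i,j) = ((i+1) mod L, j)"
fun alt :: "nat \<times> nat \<Rightarrow> nat \<times> nat" where "alt (i,j) = (if i = 0 then lf (i,j) else dn (i,j))"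
definition "valid f \<longleftrightarrow> (\<forall>a\<in>A. f a = rt a \<or> f a = alt a)"
definition "fib f w = {a\<in>A. f a = w}"
definition "par f w \<longleftrightarrow> odd (card (fib f w))"
definition "ach P \<longleftrightarrow> (\<exists>f. valid f \<and> (\<forall>w\<in>W. par f w = P w))"
definition "flip u P = P(u := \<not> P u)"
definition "R u v \<longleftrightarrow> (\<forall>P. ach P \<longrightarrow> ach (flip u (flip v P)))"

lemma memA: "(i,j) \<in> A \<longleftrightarrow> i < L \<and> j < L \<and> (i+j) mod 2 = r"
  by (auto simp: A_def color_class_def torus_V_def)
lemma memW: "(i,j) \<in> W \<longleftrightarrow> i < L \<and> j < L \<and> (i+j) mod 2 = 1 - r"
  by (auto simp: W_def color_class_def torus_V_def)
lemma memV: "(i,j) \<in> torus_V L \<longleftrightarrow> i < L \<and> j < L"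
  by (auto simp: torus_V_def)

lemma AW_disj: "A \<inter> W = {}"
proof (rule ccontr)
  assume "A \<inter> W \<noteq> {}"
  then obtain i j where "(i,j) \<in> A" "(i,j) \<in> W" by auto
  then have "(i+j) mod 2 = r" "(i+j) mod 2 = 1 - r" by (simp_all only: memA memW)
  then show False using r01 by arith
qed
lemma AW_V: "A \<union> W = torus_V L"
proof
  show "A \<union> W \<subseteq> torus_V L" by (auto simp: A_def W_def color_class_def)
  show "torus_V L \<subseteq> A \<union> W"
  proof
    fix v assume v: "v \<in> torus_V L"
    obtain i j where vij: "v = (i,j)" by (cases v)
    have "(i+j) mod 2 = r \<or> (i+j) mod 2 = 1 - r" using r01 by arith
    then show "v \<in> A \<union> W" using v vij by (auto simp only: memA memW memV Un_iff)
  qed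
qed
lemma finA: "finite A" and finW: "finite W"
  using AW_V by (metis finite_SigmaI finite_Un finite_atLeastLessThan torus_V_def)+

lemma Lpos: "L > 0" using L4 by simp

lemma rt_W: "a \<in> A \<Longrightarrow> rt a \<in> W"
proof -
  assume "a \<in> A"
  obtain i j where a: "a = (i,j)" by (cases a)
  have ij: "i < L" "j < L" "(i+j) mod 2 = r" using \<open>a \<in> A\<close> a by (simp_all only: memA)
  have "(i + (j+1) mod L) mod 2 = Suc (i+j) mod 2" using evL mod2_add_modL by simp
  also have "\<dots> = 1 - r" using sucmod2[OF ij(3) r01] .
  finally show ?thesis using a ij Lpos by (simp add: memW)
qed
lemma lf_A: "w \<in> W \<Longrightarrow> lf w \<in> A"
proof (cases w)
  case (Pair i j)
  assume "w \<in> W"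
  then have ij: "i < L" "j < L" "(i+j) mod 2 = 1 - r" using Pair by (auto simp: memW)
  have "(i + (j + L - 1) mod L) mod 2 = (i + (j + L - 1)) mod 2" using evL by (rule mod2_add_modL)
  also have "\<dots> = (Suc (i+j)) mod 2" using evL L4 predL[of L "i+j"] by (simp add: add.assoc)
  also have "\<dots> = r" using ij r01 sucmod2[of "i+j" "1-r"] by simp
  finally show ?thesis using Pair ij Lpos by (simp add: memA)
qed
lemma lf_W: "w \<in> A \<Longrightarrow> lf w \<in> W"
proof (cases w)
  case (Pair i j)
  assume "w \<in> A"
  then have ij: "i < L" "j < L" "(i+j) mod 2 = r" using Pair by (auto simp: memA)
  have "(i + (j + L - 1) mod L) mod 2 = (i + (j + L - 1)) mod 2" using evL by (rule mod2_add_modL)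
  also have "\<dots> = (Suc (i+j)) mod 2" using evL L4 predL[of L "i+j"] by (simp add: add.assoc)
  also have "\<dots> = 1 - r" using ij r01 sucmod2[of "i+j" "r"] by simp
  finally show ?thesis using Pair ij Lpos by (simp add: memW)
qed
lemma dn_W: "a \<in> A \<Longrightarrow> dn a \<in> W"
proof -
  assume "a \<in> A"
  obtain i j where a: "a = (i,j)" by (cases a)
  have ij: "i < L" "j < L" "(i+j) mod 2 = r" using \<open>a \<in> A\<close> a by (simp_all only: memA)
  have "((i+1) mod L + j) mod 2 = Suc (i+j) mod 2" using evL mod2_add_modL' by simp
  also have "\<dots> = 1 - r" using sucmod2[OF ij(3) r01] .
  finally show ?thesis using a ij Lpos by (simp add: memW)
qed
lemma alt_W: "a \<in> A \<Longrightarrow> alt a \<in> W"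
  using dn_W lf_W by (cases a) auto

lemma rt_lf: "v \<in> torus_V L \<Longrightarrow> rt (lf v) = v"
proof (cases v)
  case (Pair i j)
  assume "v \<in> torus_V L"
  then have j: "j < L" using Pair by (simp add: memV)
  show ?thesis
  proof (cases "j = 0")
    case True
    then show ?thesis using Pair j Lpos by (simp add: pred_mod suc_mod)
  next
    case False
    then have "(j+L-1) mod L = j - 1" using pred_mod[OF j] by simp
    moreover have "(j - 1 + 1) mod L = j" using j False by (simp add: suc_mod)
    ultimately show ?thesis using Pair by simp
  qed
qed
lemma lf_rt: "v \<in> torus_V L \<Longrightarrow> lf (rt v) = v"
proof (cases v)
  case (Pair i j)
  assume "v \<in> torus_V L"
  then have j: "j < L" using Pair by (simp add: memV)
  show ?thesis
  proof (cases "j + 1 = L")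
    case True
    then show ?thesis using Pair j Lpos by (simp add: pred_mod suc_mod)
  next
    case False
    then have "(j+1) mod L = j + 1" using j by (simp add: suc_mod)
    moreover have "(j + 1 + L - 1) mod L = j" using j False by (simp add: pred_mod)
    ultimately show ?thesis using Pair by simp
  qed
qed

lemma rt_ne_alt: "v \<in> torus_V L \<Longrightarrow> rt v \<noteq> alt v"
proof (cases v)
  case (Pair i j)
  assume "v \<in> torus_V L"
  then have ij: "i < L" "j < L" using Pair by (auto simp: memV)
  show ?thesis
  proof (cases "i = 0")
    case True
    have "(j+1) mod L \<noteq> (j+L-1) mod L"
      using ij L4 pred_mod[OF ij(2)] suc_mod[OF ij(2)] by auto
    then show ?thesis using Pair True by simp
  next
    case False
    have "(i+1) mod L \<noteq> i" using suc_mod[OF ij(1)] L4 by auto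
    then show ?thesis using Pair False by simp
  qed
qed


lemma lf_V: "v \<in> torus_V L \<Longrightarrow> lf v \<in> torus_V L"
  using Lpos by (cases v) (auto simp: memV)

lemma fin_fib: "finite (fib f w)" using finA by (simp add: fib_def)

lemma valid_W: "valid f \<Longrightarrow> a \<in> A \<Longrightarrow> f a \<in> W"
  using rt_W alt_W unfolding valid_def by metis

lemma flip2: "u \<noteq> v \<Longrightarrow> flip u (flip v P) = (\<lambda>w. if w = u \<or> w = v then \<not> P w else P w)"
  by (auto simp: flip_def)

lemma flip_ach:
  assumes f: "valid f" and a: "a \<in> A" and P: "\<forall>w\<in>W. par f w = P w"
  shows "ach (flip (rt a) (flip (alt a) P))"
proof -
  define old where "old = f a"
  define new where "new = (if f a = rt a then alt a else rt a)"
  define g where "g = f(a := new)"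
  have aV: "a \<in> torus_V L" using a AW_V by auto
  have ne: "rt a \<noteq> alt a" using rt_ne_alt aV .
  have on: "old \<noteq> new" and pair: "\<And>w. (w = old \<or> w = new) = (w = rt a \<or> w = alt a)"
    using f a ne by (auto simp: old_def new_def valid_def)
  have gv: "valid g" using f by (auto simp: valid_def g_def new_def)
  have fibg: "fib g w = (if w = old then fib f w - {a} else if w = new then insert a (fib f w) else fib f w)" for w
    using a on by (auto simp: fib_def g_def old_def)
  have ain: "a \<in> fib f old" using a by (simp add: fib_def old_def)
  have anin: "a \<notin> fib f new" using on by (simp add: fib_def old_def)
  have pg: "par g w = (if w = old \<or> w = new then \<not> par f w else par f w)" for w
  proof (cases "w = old")
    case True
    have "card (fib f w) \<ge> 1" using True ain fin_fib
      by (metis One_nat_def Suc_leI card_gt_0_iff empty_iff)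
    then show ?thesis using True on ain fin_fib by (auto simp: par_def fibg)
  next
    case False
    have "card (fib g new) = Suc (card (fib f new))"
      using on card_insert_disjoint[OF fin_fib anin] by (simp add: fibg)
    then show ?thesis using False by (auto simp: par_def fibg)
  qed
  have "\<forall>w\<in>W. par g w = flip (rt a) (flip (alt a) P) w"
    using P by (auto simp: flip2[OF ne] pg pair[symmetric])
  then show ?thesis using gv by (auto simp: ach_def)
qed

lemma R_gen: "a \<in> A \<Longrightarrow> R (rt a) (alt a)"
  unfolding R_def
proof (intro allI impI)
  fix P assume a: "a \<in> A" and "ach P"
  then obtain f where "valid f" "\<forall>w\<in>W. par f w = P w" unfolding ach_def by blast
  then show "ach (flip (rt a) (flip (alt a) P))" using flip_ach a by blast
qed

lemma flip_flip: "flip u (flip u P) = P" by (auto simp: flip_def)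
lemma flip_comm: "flip u (flip v P) = flip v (flip u P)"
  by (cases "u = v") (auto simp: flip_def fun_upd_twist)

lemma R_sym: "R u v \<Longrightarrow> R v u" by (simp add: R_def flip_comm)
lemma R_trans: "R u v \<Longrightarrow> R v w \<Longrightarrow> R u w"
proof -
  assume uv: "R u v" and vw: "R v w"
  show "R u w" unfolding R_def
  proof (intro allI impI)
    fix P assume "ach P"
    then have "ach (flip v (flip w P))" using vw by (simp add: R_def)
    then have "ach (flip u (flip v (flip v (flip w P))))" using uv by (simp add: R_def)
    then show "ach (flip u (flip w P))" by (simp add: flip_flip)
  qed
qed

definition "w0 = (0::nat, 1 - r)"

lemma row0: "1 - r + 2*k < L \<Longrightarrow> R (0, 1 - r + 2*k) w0"
proof (induction k)
  case 0
  show ?case unfolding w0_def R_def by (simp add: flip_flip)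
next
  case (Suc k)
  define j' where "j' = 1 - r + 2*k + 1"
  have j'L: "j' + 1 < L" using Suc.prems by (simp add: j'_def)
  have "j' mod 2 = r" using r01 unfolding j'_def by (cases "r = 0") auto
  then have aA: "(0, j') \<in> A" using j'L by (simp add: memA)
  have "rt (0,j') = (0, 1 - r + 2 * Suc k)" using j'L by (simp add: j'_def)
  moreover have "alt (0,j') = (0, 1 - r + 2*k)" using pred_mod[of j' L] j'L by (simp add: j'_def)
  ultimately have "R (0, 1 - r + 2 * Suc k) (0, 1 - r + 2*k)" using R_gen[OF aA] by simp
  moreover have "R (0, 1 - r + 2*k) w0" using Suc by simp
  ultimately show ?case by (rule R_trans)
qed

lemma R_W0: "(0,j) \<in> W \<Longrightarrow> R (0,j) w0"
proof -
  assume "(0,j) \<in> W"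
  then have "j mod 2 = 1 - r" "j < L" by (simp_all add: memW)
  then have "j = 1 - r + 2 * (j div 2)" "1 - r + 2 * (j div 2) < L" by presburger+
  then show ?thesis using row0 by metis
qed

lemma R_rows: "1 \<le> n \<Longrightarrow> n < L \<Longrightarrow> (L - n, j) \<in> W \<Longrightarrow> R (L - n, j) w0"
proof (induction n arbitrary: j)
  case 0
  then show ?case by simp
next
  case (Suc m)
  define i where "i = L - Suc m"
  have i: "i \<noteq> 0" "i + 1 < L \<or> i + 1 = L" using Suc.prems by (auto simp: i_def)
  have wW: "(i,j) \<in> W" using Suc.prems by (simp add: i_def)
  then have wV: "(i,j) \<in> torus_V L" using AW_V by auto
  define a where "a = lf (i,j)"
  have aA: "a \<in> A" using lf_A[OF wW] by (simp add: a_def)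
  have rta: "rt a = (i,j)" using rt_lf[OF wV] by (simp add: a_def)
  have alta: "alt a = dn a" using i by (simp add: a_def)
  have dW: "dn a \<in> W" using dn_W[OF aA] .
  have R1: "R (i,j) (dn a)" using R_gen[OF aA] rta alta by simp
  have "R (dn a) w0"
  proof (cases "m = 0")
    case True
    then have "i + 1 = L" using Suc.prems by (simp add: i_def)
    then have "fst (dn a) = 0" by (simp add: a_def)
    then show ?thesis using R_W0 dW by (metis prod.collapse)
  next
    case False
    then have "(i + 1) mod L = L - m" using Suc.prems by (simp add: i_def)
    then have "dn a = (L - m, snd (dn a))" by (simp add: a_def)
    then show ?thesis using Suc.IH[of "snd (dn a)"] False Suc.prems dW by simp
  qed
  then show ?case using R1 R_trans by (simp add: i_def)
qed

lemma R_all: "w \<in> W \<Longrightarrow> R w w0"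
proof (cases w)
  case (Pair i j)
  assume wW: "w \<in> W"
  then have iL: "i < L" using Pair by (simp add: memW)
  show ?thesis
  proof (cases "i = 0")
    case True then show ?thesis using R_W0 wW Pair by simp
  next
    case False
    then have "L - (L - i) = i" "1 \<le> L - i" "L - i < L" using iL by auto
    then show ?thesis using R_rows[of "L - i" j] wW Pair by simp
  qed
qed

lemma toggle: "finite T \<Longrightarrow> T \<subseteq> W \<Longrightarrow> card T = 2*n \<Longrightarrow> ach P \<Longrightarrow> ach (\<lambda>w. if w \<in> T then \<not> P w else P w)"
proof (induction n arbitrary: T)
  case 0
  then have "T = {}" by simp
  then show ?case using 0 by simp
next
  case (Suc n)
  have "T \<noteq> {}" using Suc.prems(3) by auto
  then obtain u where u: "u \<in> T" by blast
  have c1: "card (T - {u}) = Suc (2*n)" using Suc.prems u by simp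
  then have "T - {u} \<noteq> {}" by (metis card.empty Zero_not_Suc)
  then obtain v where v: "v \<in> T - {u}" by blast
  define T' where "T' = T - {u} - {v}"
  have cT': "card T' = 2*n" using c1 v Suc.prems by (simp add: T'_def)
  have "ach (\<lambda>w. if w \<in> T' then \<not> P w else P w)" (is "ach ?Q")
  proof -
    have "finite T'" "T' \<subseteq> W" using Suc.prems by (auto simp: T'_def)
    then show ?thesis using Suc.IH[OF _ _ cT' Suc.prems(4)] by blast
  qed
  moreover have "R u v" using R_all u v Suc.prems R_sym R_trans by blast
  ultimately have "ach (flip u (flip v ?Q))" by (simp add: R_def)
  moreover have "flip u (flip v ?Q) = (\<lambda>w. if w \<in> T then \<not> P w else P w)"
    using u v by (auto simp: flip2 T'_def)
  ultimately show ?case by simp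
qed

lemma fib_rt: "w \<in> W \<Longrightarrow> fib rt w = {lf w}"
proof -
  assume wW: "w \<in> W"
  have wV: "w \<in> torus_V L" using AW_V wW by blast
  have r1: "rt (lf w) = w" by (rule rt_lf[OF wV])
  have l: "lf w \<in> A" by (rule lf_A[OF wW])
  have eq: "a = lf w" if "a \<in> A" "rt a = w" for a
  proof -
    have aV: "a \<in> torus_V L" using that AW_V by blast
    have "lf (rt a) = a" by (rule lf_rt[OF aV])
    then show ?thesis using that(2) by simp
  qed
  show ?thesis
  proof
    show "fib rt w \<subseteq> {lf w}" unfolding fib_def using eq by blast
    show "{lf w} \<subseteq> fib rt w" unfolding fib_def using l r1 by blast
  qed
qed

lemma ach_true: "ach (\<lambda>w. True)"
proof -
  have "valid rt" by (simp add: valid_def)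
  moreover have "\<forall>w\<in>W. par rt w = True" using fib_rt by (simp add: par_def)
  ultimately show ?thesis unfolding ach_def by blast
qed

lemma cardAW: "card A = card W"
proof -
  have "bij_betw rt A W"
  proof (rule bij_betw_byWitness[where f' = lf])
    show "rt ` A \<subseteq> W" using rt_W by blast
    show "lf ` W \<subseteq> A" using lf_A by blast
    show "\<forall>x\<in>A. lf (rt x) = x"
    proof
      fix x assume "x \<in> A" then have "x \<in> torus_V L" using AW_V by blast
      then show "lf (rt x) = x" by (rule lf_rt)
    qed
    show "\<forall>y\<in>W. rt (lf y) = y"
    proof
      fix x assume "x \<in> W" then have "x \<in> torus_V L" using AW_V by blast
      then show "rt (lf x) = x" by (rule rt_lf)
    qed
  qed
  then show ?thesis by (rule bij_betw_same_card)
qed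

lemma cardA: "card A = L^2 div 2"
proof -
  have "card (torus_V L) = L * L" by (simp add: torus_V_def card_cartesian_product)
  moreover have "card (A \<union> W) = card A + card W" by (rule card_Un_disjoint[OF finA finW AW_disj])
  ultimately have "card A + card W = L * L" using AW_V by simp
  then show ?thesis using cardAW by (simp add: power2_eq_square)
qed

lemma edge_rt: "v \<in> torus_V L \<Longrightarrow> {v, rt v} \<in> torus_E L"
  unfolding torus_E_def by (cases v) auto
lemma edge_dn: "v \<in> torus_V L \<Longrightarrow> {v, dn v} \<in> torus_E L"
  unfolding torus_E_def by (cases v) auto
lemma edge_lf: "v \<in> torus_V L \<Longrightarrow> {v, lf v} \<in> torus_E L"
proof -
  assume v: "v \<in> torus_V L"
  have "{lf v, rt (lf v)} \<in> torus_E L" using edge_rt lf_V v by blast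
  then show ?thesis using rt_lf v by (simp add: insert_commute)
qed
lemma edge_alt: "v \<in> torus_V L \<Longrightarrow> {v, alt v} \<in> torus_E L"
  using edge_lf edge_dn by (cases v) auto

lemma main:
  assumes D: "D \<subseteq> torus_V L" "even (card D)" "A \<subseteq> D"
  shows "\<exists>J. is_join L D J \<and> card J = L^2 div 2"
proof -
  define T where "T = W - D"
  have finD: "finite D" using D(1) finA finW AW_V by (metis finite_Un finite_subset)
  have c1: "card D = card A + card (D \<inter> W)"
  proof -
    have "D = A \<union> (D \<inter> W)" using D AW_V by auto
    then show ?thesis using AW_disj finA finW card_Un_disjoint
      by (metis Int_commute Int_left_commute inf_bot_right finite_Int)
  qed
  have c2: "card W = card T + card (D \<inter> W)"
  proof -
    have "W = T \<union> (D \<inter> W)" by (auto simp: T_def)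
    then show ?thesis using finW card_Un_disjoint[of T "D \<inter> W"] by (auto simp: T_def)
  qed
  have "card D = card T + 2 * card (D \<inter> W)" using c1 c2 cardAW by simp
  then have "even (card T)" using D(2) by simp
  then have "card T = 2 * (card T div 2)" by simp
  then have "ach (\<lambda>w. if w \<in> T then \<not> True else True)"
    using toggle[of T "card T div 2" "\<lambda>w. True"] finW ach_true by (auto simp: T_def)
  then obtain f where f: "valid f" and pf: "\<forall>w\<in>W. par f w = (w \<in> D)"
    by (auto simp: ach_def T_def)
  define J where "J = (\<lambda>a. {a, f a}) ` A"
  have fW: "a \<in> A \<Longrightarrow> f a \<in> W" for a using valid_W[OF f] .
  have inj: "inj_on (\<lambda>a. {a, f a}) A"
  proof (rule inj_onI)
    fix a b assume ab: "a \<in> A" "b \<in> A" "{a, f a} = {b, f b}"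
    then have "a \<in> {b, f b}" by auto
    then show "a = b" using fW[OF ab(2)] ab(1) AW_disj by auto
  qed
  have cJ: "card J = L^2 div 2" using inj cardA by (simp add: J_def card_image)
  have JE: "J \<subseteq> torus_E L"
  proof
    fix e assume "e \<in> J"
    then obtain a where a: "a \<in> A" "e = {a, f a}" by (auto simp: J_def)
    then have "a \<in> torus_V L" using AW_V by auto
    then show "e \<in> torus_E L" using a f edge_rt edge_alt unfolding valid_def by metis
  qed
  have degA: "jdeg J v = 1" if "v \<in> A" for v
  proof -
    have "{e \<in> J. v \<in> e} = {{v, f v}}"
      using that fW AW_disj by (auto simp: J_def)
    then show ?thesis by (simp add: jdeg_def)
  qed
  have degW: "jdeg J v = card (fib f v)" if "v \<in> W" for v
  proof -
    have "{e \<in> J. v \<in> e} = (\<lambda>a. {a, f a}) ` fib f v"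
      using that fW AW_disj by (auto simp: J_def fib_def)
    moreover have "inj_on (\<lambda>a. {a, f a}) (fib f v)" using inj by (rule inj_on_subset) (auto simp: fib_def)
    ultimately show ?thesis by (simp add: jdeg_def card_image)
  qed
  have "is_join L D J"
    unfolding is_join_def
  proof (intro conjI ballI)
    show "J \<subseteq> torus_E L" by (rule JE)
  next
    fix v assume v: "v \<in> D"
    show "odd (jdeg J v)"
    proof (cases "v \<in> A")
      case True then show ?thesis using degA by simp
    next
      case False
      then have "v \<in> W" using v D(1) AW_V by auto
      then show ?thesis using degW pf[rule_format, OF \<open>v \<in> W\<close>] v by (simp add: par_def)
    qed
  next
    fix v assume v: "v \<in> torus_V L - D"
    then have "v \<in> W" using D(3) AW_V by auto
    then show "even (jdeg J v)" using degW pf[rule_format, OF \<open>v \<in> W\<close>] v by (simp add: par_def)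
  qed
  then show ?thesis using cJ by blast
qed

end

theorem lemmaA9:
  fixes L :: nat and r :: nat and D :: "(nat \<times> nat) set"
  assumes "L \<ge> 4" and "even L"
    and "r \<in> {0, 1}"
    and "D \<subseteq> torus_V L" and "even (card D)"
    and "color_class L r \<subseteq> D"
  shows "\<exists>J. is_join L D J \<and> card J = L^2 div 2"
proof -
  interpret tor L r using assms by unfold_locales auto
  show ?thesis using main assms by (simp add: A_def)
qed

end
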